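(* For every integer $P\ge1$ and every integer $k\ge2$, $$\sum_{i\in\{0\}\times\mathbb Z_{\ge0}^{k-1}}\exp\Bigl(-\ln(4)\sum_{j=2}^k\mathbb 1\{i_j>i_{j-1}\}\Bigl\lfloor\frac{i_j-i_{j-1}}{P}\Bigr\rfloor\Bigr)\le c\,(9P)^{k-1},\qquad c:=\mathrm e^{2+1/12}/2,$$ where $i=(i_1,\dots,i_k)$ with $i_1=0$. *)

theory Defs
  imports "HOL-Analysis.Analysis"
begin

end

theory Submission
  imports Defs
begin

definition fw :: "nat \<Rightarrow> nat \<Rightarrow> nat \<Rightarrow> real" where
  "fw P a b = exp (- ln 4 * (if b > a then real_of_int \<lfloor>(real b - real a) / real P\<rfloor> else 0))"

definition gp :: "nat \<Rightarrow> nat \<Rightarrow> real" where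
  "gp P b = 2 ^ (b div P)"

lemma block_sum:
  fixes G :: "nat \<Rightarrow> real"
  assumes "P \<ge> 1"
  shows "(\<Sum>d<M*P. G (d div P)) = real P * (\<Sum>m<M. G m)"
proof -
  have "(\<Sum>d<M*P. G (d div P)) = (\<Sum>m<M. \<Sum>d\<in>{m*P..<m*P+P}. G (d div P))"
    by (rule sum.nat_group[symmetric])
  also have "\<dots> = (\<Sum>m<M. real P * G m)"
  proof (rule sum.cong[OF refl])
    fix m assume "m \<in> {..<M}"
    have "(\<Sum>d\<in>{m*P..<m*P+P}. G (d div P)) = (\<Sum>d\<in>{m*P..<m*P+P}. G m)"
    proof (rule sum.cong[OF refl])
      fix d assume "d \<in> {m*P..<m*P+P}"
      then have "d div P = m" using assms
        by (intro div_nat_eqI) (auto simp: algebra_simps)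
      then show "G (d div P) = G m" by simp
    qed
    then show "(\<Sum>d\<in>{m*P..<m*P+P}. G (d div P)) = real P * G m" by simp
  qed
  finally show ?thesis by (simp add: sum_distrib_left)
qed

lemma sumA:
  assumes "P \<ge> 1"
  shows "(\<Sum>d<D. (1/2::real)^(d div P)) \<le> 2 * real P"
proof -
  have "(\<Sum>d<D. (1/2::real)^(d div P)) \<le> (\<Sum>d<D*P. (1/2::real)^(d div P))"
    using assms by (intro sum_mono2) auto
  also have "\<dots> = real P * (\<Sum>m<D. (1/2::real)^m)"
    using block_sum[OF assms] .
  also have "(\<Sum>m<D. (1/2::real)^m) \<le> 2"
    by (simp add: sum_gp_strict)
  finally show ?thesis using assms by (simp add: mult.commute mult_left_mono)
qed

lemma sumB:
  assumes "P \<ge> 1"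
  shows "(\<Sum>b\<le>a. gp P b) \<le> 2 * real P * gp P a"
proof -
  define M where "M = a div P + 1"
  have "a = a div P * P + a mod P" by simp
  moreover have "a mod P < P" using assms by simp
  moreover have "M * P = a div P * P + P" unfolding M_def by simp
  ultimately have "a < M * P" by linarith
  then have "(\<Sum>b\<le>a. gp P b) \<le> (\<Sum>b<M*P. gp P b)"
    by (intro sum_mono2) (auto simp: gp_def)
  also have "\<dots> = real P * (\<Sum>m<M. (2::real)^m)"
    unfolding gp_def using block_sum[OF assms] .
  also have "(\<Sum>m<M. (2::real)^m) = 2^M - 1"
    by (simp add: sum_gp_strict)
  also have "real P * (2^M - 1) \<le> 2 * real P * gp P a"
    unfolding M_def gp_def by (simp add: algebra_simps)
  finally show ?thesis by simp
qed

lemma div_add_le: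
  fixes x y P :: nat
  assumes "P \<ge> 1"
  shows "(x + y) div P \<le> x div P + y div P + 1"
proof -
  have "x mod P < P" "y mod P < P" using assms by simp_all
  then have "x mod P + y mod P < 2 * P" by linarith
  then have "(x mod P + y mod P) div P < 2"
    using less_mult_imp_div_less[of "x mod P + y mod P" 2 P] by simp
  then show ?thesis using div_add1_eq[of x y P] by linarith
qed

lemma fw_le: "b \<le> a \<Longrightarrow> fw P a b = 1"
  by (simp add: fw_def)

lemma fw_gt: "b > a \<Longrightarrow> fw P a b = (1/4) ^ ((b - a) div P)"
proof -
  assume ba: "b > a"
  then have e1: "real b - real a = real (b - a)" by simp
  have e2: "real_of_int \<lfloor>(real b - real a) / real P\<rfloor> = real ((b - a) div P)"
    unfolding e1 floor_divide_of_nat_eq of_int_of_nat_eq ..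
  have "fw P a b = exp (- ln 4 * real ((b - a) div P))"
    unfolding fw_def e2 using ba by simp
  also have "\<dots> = exp (real ((b - a) div P) * (- ln 4))"
    by (simp only: mult.commute)
  also have "\<dots> = exp (- ln 4) ^ ((b - a) div P)"
    by (rule exp_of_nat_mult)
  also have "exp (- ln 4) = (1/4::real)"
    by (simp add: exp_minus)
  finally show ?thesis .
qed

lemma step_bound:
  assumes "P \<ge> 1"
  shows "(\<Sum>b\<in>{0..N}. fw P a b * gp P b) \<le> 9 * real P * gp P a"
proof -
  let ?h = "\<lambda>b. fw P a b * gp P b"
  have split: "(\<Sum>b\<in>{0..N}. ?h b) = (\<Sum>b\<in>{0..N} \<inter> {..a}. ?h b) + (\<Sum>b\<in>{0..N} - {..a}. ?h b)"
    by (rule sum.Int_Diff) simp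
  have p1: "(\<Sum>b\<in>{0..N} \<inter> {..a}. ?h b) \<le> 2 * real P * gp P a"
  proof -
    have "(\<Sum>b\<in>{0..N} \<inter> {..a}. ?h b) = (\<Sum>b\<in>{0..N} \<inter> {..a}. gp P b)"
      by (rule sum.cong) (auto simp: fw_le)
    also have "\<dots> \<le> (\<Sum>b\<le>a. gp P b)"
      by (rule sum_mono2) (auto simp: gp_def)
    also have "\<dots> \<le> 2 * real P * gp P a" by (rule sumB[OF assms])
    finally show ?thesis .
  qed
  have p2: "(\<Sum>b\<in>{0..N} - {..a}. ?h b) \<le> 4 * real P * gp P a"
  proof -
    let ?u = "\<lambda>b. 2 * gp P a * (1/2::real) ^ ((b - a) div P)"
    have "(\<Sum>b\<in>{0..N} - {..a}. ?h b) \<le> (\<Sum>b\<in>{0..N} - {..a}. ?u b)"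
    proof (rule sum_mono)
      fix b assume "b \<in> {0..N} - {..a}"
      then have ba: "b > a" by auto
      let ?n = "(b - a) div P"
      have "b div P \<le> a div P + ?n + 1"
        using div_add_le[OF assms, of a "b - a"] ba by simp
      then have "gp P b \<le> 2 ^ (a div P + ?n + 1)"
        unfolding gp_def by (intro power_increasing) auto
      also have "\<dots> = 2 * gp P a * 2 ^ ?n" by (simp add: gp_def power_add)
      finally have g: "gp P b \<le> 2 * gp P a * 2 ^ ?n" .
      have "?h b = (1/4) ^ ?n * gp P b" using ba by (simp add: fw_gt)
      also have "\<dots> \<le> (1/4) ^ ?n * (2 * gp P a * 2 ^ ?n)"
        by (intro mult_left_mono g) simp
      also have "\<dots> = ?u b"
        by (simp add: power_mult_distrib[symmetric] field_simps power_divide)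
      finally show "?h b \<le> ?u b" .
    qed
    also have "\<dots> \<le> (\<Sum>b\<in>(\<lambda>d. d + a) ` {..<N+1}. ?u b)"
    proof (rule sum_mono2)
      show "{0..N} - {..a} \<subseteq> (\<lambda>d. d + a) ` {..<N+1}"
      proof
        fix x assume "x \<in> {0..N} - {..a}"
        then have "x = (x - a) + a" "x - a \<in> {..<N+1}" by auto
        then show "x \<in> (\<lambda>d. d + a) ` {..<N+1}" by (rule image_eqI)
      qed
    qed (auto simp: gp_def)
    also have "\<dots> = (\<Sum>d<N+1. ?u (d + a))"
      by (simp add: sum.reindex inj_on_def)
    also have "\<dots> = 2 * gp P a * (\<Sum>d<N+1. (1/2::real) ^ (d div P))"
      by (simp only: add_diff_cancel_right' sum_distrib_left)
    also have "\<dots> \<le> 2 * gp P a * (2 * real P)"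
      by (intro mult_left_mono sumA[OF assms]) (simp add: gp_def)
    also have "2 * gp P a * (2 * real P) = 4 * real P * gp P a" by simp
    finally show ?thesis .
  qed
  have "0 \<le> gp P a" by (simp add: gp_def)
  then have "6 * real P * gp P a \<le> 9 * real P * gp P a"
    by (intro mult_right_mono) auto
  then show ?thesis using split p1 p2 by linarith
qed

lemma fw_nonneg: "0 \<le> fw P a b" by (simp add: fw_def)

lemma box:
  assumes P: "P \<ge> 1" and n: "n \<ge> 1"
  shows "(\<Sum>i \<in> PiE {1..n} (\<lambda>j. if j = 1 then {0::nat} else {0..N}).
           (\<Prod>j=2..n. fw P (i (j-1)) (i j)) * gp P (i n)) \<le> (9 * real P) ^ (n - 1)"
  using n
proof (induction n rule: dec_induct)
  case base
  have e: "{1..1::nat} = insert 1 {}" by simp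
  have "PiE {1..1::nat} (\<lambda>j. if j = 1 then {0::nat} else {0..N}) = {(\<lambda>x. undefined)(1 := 0)}"
    unfolding e PiE_insert_eq PiE_empty_domain by auto
  then show ?case by (simp add: gp_def)
next
  case (step n)
  define T where "T = (\<lambda>j::nat. if j = 1 then {0::nat} else {0..N})"
  define Pr where "Pr = (\<lambda>i::nat\<Rightarrow>nat. \<Prod>j=2..n. fw P (i (j-1)) (i j))"
  define F where "F = (\<lambda>i::nat\<Rightarrow>nat. (\<Prod>j=2..Suc n. fw P (i (j-1)) (i j)) * gp P (i (Suc n)))"
  have IH: "(\<Sum>i \<in> PiE {1..n} T. Pr i * gp P (i n)) \<le> (9 * real P) ^ (n - 1)"
    using step.IH unfolding T_def Pr_def .
  have ins: "{1..Suc n} = insert (Suc n) {1..n}" using step.hyps by auto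
  have TS: "T (Suc n) = {0..N}" using step.hyps by (simp add: T_def)
  have "(\<Sum>i \<in> PiE {1..Suc n} T. F i)
      = (\<Sum>i \<in> (\<lambda>(y, g). g(Suc n := y)) ` (T (Suc n) \<times> PiE {1..n} T). F i)"
    by (simp only: ins PiE_insert_eq)
  also have "\<dots> = (\<Sum>p \<in> T (Suc n) \<times> PiE {1..n} T. F ((\<lambda>(y, g). g(Suc n := y)) p))"
    by (rule sum.reindex[unfolded comp_def]) (rule inj_combinator, simp)
  also have "\<dots> = (\<Sum>y \<in> T (Suc n). \<Sum>g \<in> PiE {1..n} T. F (g(Suc n := y)))"
    by (subst sum.cartesian_product) (rule sum.cong, auto)
  also have "\<dots> = (\<Sum>g \<in> PiE {1..n} T. \<Sum>y \<in> {0..N}. F (g(Suc n := y)))"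
    by (simp add: TS sum.swap[of _ "{0..N}"])
  also have "\<dots> = (\<Sum>g \<in> PiE {1..n} T. Pr g * (\<Sum>y \<in> {0..N}. fw P (g n) y * gp P y))"
  proof (rule sum.cong[OF refl])
    fix g assume "g \<in> PiE {1..n} T"
    have "F (g(Suc n := y)) = Pr g * (fw P (g n) y * gp P y)" for y
    proof -
      have "(\<Prod>j=2..Suc n. fw P ((g(Suc n := y)) (j-1)) ((g(Suc n := y)) j))
          = (\<Prod>j=2..n. fw P ((g(Suc n := y)) (j-1)) ((g(Suc n := y)) j)) * fw P (g n) y"
        using step.hyps by (simp add: prod.cl_ivl_Suc)
      also have "(\<Prod>j=2..n. fw P ((g(Suc n := y)) (j-1)) ((g(Suc n := y)) j)) = Pr g"
        unfolding Pr_def by (rule prod.cong) auto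
      finally show ?thesis unfolding F_def by simp
    qed
    then show "(\<Sum>y \<in> {0..N}. F (g(Suc n := y))) = Pr g * (\<Sum>y \<in> {0..N}. fw P (g n) y * gp P y)"
      by (simp add: sum_distrib_left)
  qed
  also have "\<dots> \<le> (\<Sum>g \<in> PiE {1..n} T. Pr g * (9 * real P * gp P (g n)))"
  proof (rule sum_mono)
    fix g assume "g \<in> PiE {1..n} T"
    have "0 \<le> Pr g" unfolding Pr_def by (intro prod_nonneg) (simp add: fw_nonneg)
    then show "Pr g * (\<Sum>y \<in> {0..N}. fw P (g n) y * gp P y) \<le> Pr g * (9 * real P * gp P (g n))"
      by (intro mult_left_mono step_bound[OF P]) 
  qed
  also have "\<dots> = 9 * real P * (\<Sum>g \<in> PiE {1..n} T. Pr g * gp P (g n))"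
    by (subst sum_distrib_left) (rule sum.cong, auto simp: algebra_simps)
  also have "\<dots> \<le> 9 * real P * (9 * real P) ^ (n - 1)"
    by (intro mult_left_mono IH) simp
  also have "\<dots> = (9 * real P) ^ (Suc n - 1)"
  proof -
    obtain m where "n = Suc m" using step.hyps by (cases n) auto
    then show ?thesis by simp
  qed
  finally have X: "(\<Sum>i \<in> PiE {1..Suc n} T. F i) \<le> (9 * real P) ^ (Suc n - 1)" .
  show ?case using X unfolding F_def T_def by simp
qed

theorem lemma6:
  fixes P k :: nat
  assumes "P \<ge> 1" and "k \<ge> 2"
  defines "S \<equiv> PiE {1..k} (\<lambda>j. if j = 1 then {0::nat} else UNIV)"
    and "w \<equiv> (\<lambda>i::nat \<Rightarrow> nat. exp (- ln 4 * (\<Sum>j=2..k.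
            (if i j > i (j - 1)
             then real_of_int \<lfloor>(real (i j) - real (i (j - 1))) / real P\<rfloor> else 0))))"
    and "c \<equiv> exp (2 + 1/12) / 2"
  shows "w summable_on S \<and> infsum w S \<le> c * (9 * real P) ^ (k - 1)"
proof -
  have wprod: "w i = (\<Prod>j=2..k. fw P (i (j-1)) (i j))" for i
    unfolding w_def fw_def by (simp add: sum_distrib_left exp_sum)
  have wnn: "0 \<le> w i" for i unfolding w_def by simp
  have fin: "sum w F \<le> (9 * real P) ^ (k - 1)" if F: "finite F" "F \<subseteq> S" for F
  proof -
    define N where "N = Max (\<Union>i\<in>F. i ` {1..k})"
    define B where "B = PiE {1..k} (\<lambda>j. if j = 1 then {0::nat} else {0..N})"
    have finU: "finite (\<Union>i\<in>F. i ` {1..k})" using F by auto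
    have FB: "F \<subseteq> B"
    proof
      fix i assume iF: "i \<in> F"
      then have iS: "i \<in> S" using F by auto
      have "i j \<in> (if j = 1 then {0::nat} else {0..N})" if j: "j \<in> {1..k}" for j
      proof (cases "j = 1")
        case True
        have "i 1 \<in> (if (1::nat) = 1 then {0::nat} else UNIV)"
          using PiE_mem[OF iS[unfolded S_def], of 1] True j by simp
        then have "i 1 \<in> {0}" by simp
        then show ?thesis using True by simp
      next
        case False
        have "i j \<in> (\<Union>i\<in>F. i ` {1..k})" using iF j by blast
        then have "i j \<le> N" unfolding N_def using finU by (intro Max_ge)
        then show ?thesis using False by simp
      qed
      moreover have "i \<in> extensional {1..k}" using iS unfolding S_def by (simp add: PiE_iff)
      ultimately show "i \<in> B" unfolding B_def by (simp add: PiE_iff)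
    qed
    have finB: "finite B" unfolding B_def by (intro finite_PiE) auto
    have "sum w F \<le> sum w B" using FB finB wnn by (intro sum_mono2) auto
    also have "\<dots> \<le> (\<Sum>i\<in>B. (\<Prod>j=2..k. fw P (i (j-1)) (i j)) * gp P (i k))"
    proof (rule sum_mono)
      fix i assume "i \<in> B"
      have "1 \<le> gp P (i k)" unfolding gp_def by simp
      then show "w i \<le> (\<Prod>j=2..k. fw P (i (j-1)) (i j)) * gp P (i k)"
        using wnn[of i] unfolding wprod by (simp add: mult_le_cancel_left1)
    qed
    also have "\<dots> \<le> (9 * real P) ^ (k - 1)"
      unfolding B_def using box[OF assms(1), of k N] assms(2) by simp
    finally show ?thesis .
  qed
  have summ: "w summable_on S"
    by (rule nonneg_bdd_above_summable_on) (use wnn fin in \<open>auto intro!: bdd_aboveI\<close>)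
  have c1: "1 \<le> c"
  proof -
    have "1 + (2 + 1/12) \<le> exp (2 + 1/12::real)"
      by (rule exp_ge_add_one_self)
    then show ?thesis unfolding c_def by simp
  qed
  have "infsum w S \<le> (9 * real P) ^ (k - 1)"
    by (rule infsum_le_finite_sums[OF summ fin])
  also have "\<dots> \<le> c * (9 * real P) ^ (k - 1)"
  proof -
    have "0 \<le> (9 * real P) ^ (k - 1)" by simp
    then have "1 * (9 * real P) ^ (k - 1) \<le> c * (9 * real P) ^ (k - 1)"
      by (rule mult_right_mono[OF c1])
    then show ?thesis by simp
  qed
  finally show ?thesis using summ by simp
qed

end
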